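(* Let $N\ge0$ be an integer and let $\phi\in L^2(\mathbb{Q}_p)$ be a refinable function with $\operatorname{supp}\phi\subset B_N(0)$. Then there exist complex numbers $h_k$, $k=0,\dots,p^{N+1}-1$, such that $$\phi(x)=\sum_{k=0}^{p^{N+1}-1}h_k\,\phi\Big(\frac{x}{p}-\frac{k}{p^{N+1}}\Big)\qquad\text{for all }x\in\mathbb{Q}_p$$ (as elements of $L^2(\mathbb{Q}_p)$).
   Context: $p$ is a prime, $\mathbb{Q}_p$ the field of $p$-adic numbers with norm $|\cdot|_p$ and Haar measure $dx$. Every nonzero $x\in\mathbb{Q}_p$ has canonical form $x=p^{\gamma}\sum_{j\ge0}x_jp^j$ with $x_j\in\{0,\dots,p-1\}$, $x_0\ne0$; its fractional part is $\{x\}_p=p^{\gamma}\sum_{j=0}^{-\gamma-1}x_jp^j$, and $\{0\}_p=0$. $I_p=\{a\in\mathbb{Q}_p:\{a\}_p=a\}$, $B_\gamma(a)=\{x:|x-a|_p\le p^\gamma\}$. A function $\phi\in L^2(\mathbb{Q}_p)$ is called refinable if it satisfies a refinement equation $\phi(x)=\sum_{a\in I_p}\alpha_a\phi(p^{-1}x-a)$ with complex coefficients $\alpha_a$ (convergence in $L^2(\mathbb{Q}_p)$), i.e. $\phi$ lies in $\overline{\operatorname{span}\{\phi(p^{-1}x-a): a\in I_p\}}$. *)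

theory Defs
  imports "HOL-Analysis.Analysis"
begin

text \<open>A concrete model of the p-adic numbers Q_p via canonical digit expansions.
  An element x = sum_j x_j p^j is represented by its digit function d :: int => nat,
  with digits in {0..p-1} and d j = 0 for all sufficiently negative j.\<close>

definition qp :: "nat \<Rightarrow> (int \<Rightarrow> nat) set" where
  "qp p = {d. (\<forall>j. d j < p) \<and> (\<exists>g. \<forall>j<g. d j = 0)}"

definition qp_zero :: "int \<Rightarrow> nat" where
  "qp_zero = (\<lambda>_. 0)"

definition qp_trunc :: "nat \<Rightarrow> (int \<Rightarrow> nat) \<Rightarrow> int \<Rightarrow> real" where
  "qp_trunc p d n = (\<Sum>j\<in>{j. j < n \<and> d j \<noteq> 0}. real (d j) * real p powi j)"

definition rmod :: "real \<Rightarrow> real \<Rightarrow> real" where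
  "rmod a m = a - m * of_int \<lfloor>a / m\<rfloor>"

text \<open>Subtraction x - y in Q_p: the digit j of x - y is read off from
  (x - y) mod p^(j+1), computed from the truncations.\<close>
definition qp_diff :: "nat \<Rightarrow> (int \<Rightarrow> nat) \<Rightarrow> (int \<Rightarrow> nat) \<Rightarrow> (int \<Rightarrow> nat)" where
  "qp_diff p x y = (\<lambda>j. nat \<lfloor>rmod (qp_trunc p x (j+1) - qp_trunc p y (j+1)) (real p powi (j+1))
                          / real p powi j\<rfloor>)"

definition qp_divp :: "nat \<Rightarrow> (int \<Rightarrow> nat) \<Rightarrow> (int \<Rightarrow> nat)" where
  "qp_divp p x = (\<lambda>j. x (j+1))"

definition qp_of_nat :: "nat \<Rightarrow> nat \<Rightarrow> (int \<Rightarrow> nat)" where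
  "qp_of_nat p k = (\<lambda>j. if j < 0 then 0 else (k div p ^ nat j) mod p)"

definition qp_norm :: "nat \<Rightarrow> (int \<Rightarrow> nat) \<Rightarrow> real" where
  "qp_norm p x = (if x = qp_zero then 0 else real p powr (- real_of_int (LEAST j. x j \<noteq> 0)))"

definition qp_frac :: "(int \<Rightarrow> nat) \<Rightarrow> (int \<Rightarrow> nat)" where
  "qp_frac x = (\<lambda>j. if j < 0 then x j else 0)"

definition Ip :: "nat \<Rightarrow> (int \<Rightarrow> nat) set" where
  "Ip p = {a \<in> qp p. qp_frac a = a}"

definition qp_ball :: "nat \<Rightarrow> int \<Rightarrow> (int \<Rightarrow> nat) \<Rightarrow> (int \<Rightarrow> nat) set" where
  "qp_ball p g a = {x \<in> qp p. qp_norm p (qp_diff p x a) \<le> real p powr real_of_int g}"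

definition qp_space :: "nat \<Rightarrow> (int \<Rightarrow> nat) measure" where
  "qp_space p = sigma (qp p) {qp_ball p g a | g a. a \<in> qp p}"

text \<open>Haar measure on Q_p (normalised by mu(Z_p) = 1), obtained as the image of Lebesgue
  measure on [0,inf) under the inverse Monna map t |-> (digit j = floor(t p^(j+1)) mod p).\<close>
definition qp_of_real :: "nat \<Rightarrow> real \<Rightarrow> (int \<Rightarrow> nat)" where
  "qp_of_real p t = (\<lambda>j. nat (\<lfloor>t * real p powi (j+1)\<rfloor> mod int p))"

definition haar :: "nat \<Rightarrow> (int \<Rightarrow> nat) measure" where
  "haar p = distr (restrict_space lborel {0..}) (qp_space p) (qp_of_real p)"

definition qp_L2 :: "nat \<Rightarrow> ((int \<Rightarrow> nat) \<Rightarrow> complex) \<Rightarrow> bool" where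
  "qp_L2 p f \<longleftrightarrow> f \<in> borel_measurable (haar p) \<and> integrable (haar p) (\<lambda>x. (cmod (f x))\<^sup>2)"

text \<open>Refinable: phi lies in the L^2-closure of span{phi(p^{-1}x - a) : a in I_p}.\<close>
definition refinable :: "nat \<Rightarrow> ((int \<Rightarrow> nat) \<Rightarrow> complex) \<Rightarrow> bool" where
  "refinable p f \<longleftrightarrow> qp_L2 p f \<and>
     (\<forall>e>0. \<exists>F c. finite F \<and> F \<subseteq> Ip p \<and>
        (\<integral>\<^sup>+ x. ennreal ((cmod (f x - (\<Sum>a\<in>F. c a * f (qp_diff p (qp_divp p x) a))))\<^sup>2) \<partial>haar p)
          < ennreal e)"

end

theory Submission
  imports Defs
begin



definition L2n :: "'a measure \<Rightarrow> ('a \<Rightarrow> complex) \<Rightarrow> ennreal" where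
  "L2n M f = (\<integral>\<^sup>+ x. ennreal ((cmod (f x))\<^sup>2) \<partial>M)"

lemma cmod_add_sq_le: "(cmod (a + b))\<^sup>2 \<le> 2 * (cmod a)\<^sup>2 + 2 * (cmod b)\<^sup>2"
proof -
  have "cmod (a+b) \<le> cmod a + cmod b" by (rule norm_triangle_ineq)
  hence "(cmod (a+b))\<^sup>2 \<le> (cmod a + cmod b)\<^sup>2" by (simp add: power_mono)
  also have "\<dots> \<le> 2 * (cmod a)\<^sup>2 + 2 * (cmod b)\<^sup>2"
    by (smt (verit, best) sum_squares_bound power2_sum)
  finally show ?thesis .
qed

lemma L2n_add:
  assumes "f \<in> borel_measurable M" "g \<in> borel_measurable M"
  shows "L2n M (\<lambda>x. f x + g x) \<le> 2 * L2n M f + 2 * L2n M g"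
proof -
  have "L2n M (\<lambda>x. f x + g x) \<le> (\<integral>\<^sup>+ x. 2 * ennreal ((cmod (f x))\<^sup>2) + 2 * ennreal ((cmod (g x))\<^sup>2) \<partial>M)"
    unfolding L2n_def
  proof (rule nn_integral_mono)
    fix x
    have "ennreal ((cmod (f x + g x))\<^sup>2) \<le> ennreal (2 * (cmod (f x))\<^sup>2 + 2 * (cmod (g x))\<^sup>2)"
      by (rule ennreal_leI, rule cmod_add_sq_le)
    also have "\<dots> = 2 * ennreal ((cmod (f x))\<^sup>2) + 2 * ennreal ((cmod (g x))\<^sup>2)"
      by (simp add: ennreal_plus ennreal_mult)
    finally show "ennreal ((cmod (f x + g x))\<^sup>2) \<le> 2 * ennreal ((cmod (f x))\<^sup>2) + 2 * ennreal ((cmod (g x))\<^sup>2)" .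
  qed
  also have "\<dots> = 2 * L2n M f + 2 * L2n M g"
    unfolding L2n_def using assms
    by (subst nn_integral_add) (auto simp: nn_integral_cmult)
  finally show ?thesis .
qed

lemma L2n_scale:
  assumes "f \<in> borel_measurable M"
  shows "L2n M (\<lambda>x. c * f x) = ennreal ((cmod c)\<^sup>2) * L2n M f"
  unfolding L2n_def using assms
  by (subst nn_integral_cmult[symmetric]) (auto simp: norm_mult power_mult_distrib ennreal_mult)

lemma L2n_minus: "L2n M (\<lambda>x. - f x) = L2n M f"
  unfolding L2n_def by simp

lemma ennreal_eps_zero:
  assumes "\<forall>e>0. (x::ennreal) < ennreal e" shows "x = 0"
proof -
  have "x \<le> 0 + ennreal e" if "0 < e" for e using assms that by (simp add: less_imp_le)
  hence "x \<le> 0" by (rule ennreal_le_epsilon) auto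
  thus ?thesis by simp
qed

lemma ennreal_helper1:
  assumes "X < ennreal a" "Y \<le> ennreal a" "0 \<le> a"
  shows "2 * X + 2 * Y < ennreal (4 * a)"
proof -
  obtain x where x: "X = ennreal x" "0 \<le> x" "x < a"
    using assms(1) by (cases X) (auto simp: ennreal_less_iff)
  obtain y where y: "Y = ennreal y" "0 \<le> y" "y \<le> a"
    using assms(2,3) by (cases Y) (auto simp: ennreal_le_iff top_unique)
  have "2 * X + 2 * Y = ennreal (2*x + 2*y)" using x y by (simp add: ennreal_plus ennreal_mult)
  also have "\<dots> < ennreal (4*a)" using x y by (subst ennreal_less_iff) auto
  finally show ?thesis .
qed
lemma closed_span:
  fixes M :: "'a measure" and g :: "nat \<Rightarrow> 'a \<Rightarrow> complex"
  assumes "\<forall>i<n. g i \<in> borel_measurable M" "\<forall>i<n. L2n M (g i) < \<infinity>"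
  shows "f \<in> borel_measurable M \<Longrightarrow> L2n M f < \<infinity> \<Longrightarrow>
    (\<forall>e>0. \<exists>c. L2n M (\<lambda>x. f x - (\<Sum>i<n. c i * g i x)) < ennreal e) \<Longrightarrow>
    \<exists>c. L2n M (\<lambda>x. f x - (\<Sum>i<n. c i * g i x)) = 0"
  using assms
proof (induction n arbitrary: f)
  case 0
  then show ?case using ennreal_eps_zero by auto
next
  case (Suc n)
  note fm = Suc.prems(1) and fN = Suc.prems(2) and fap = Suc.prems(3)
  have gm: "\<forall>i<n. g i \<in> borel_measurable M" "\<forall>i<n. L2n M (g i) < \<infinity>" using Suc.prems(4,5) by auto
  have hm: "g n \<in> borel_measurable M" and hN: "L2n M (g n) < \<infinity>" using Suc.prems(4,5) by auto
  have Sm: "(\<lambda>x. \<Sum>i<k. c i * g i x) \<in> borel_measurable M" if "k \<le> Suc n" for c k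
    using Suc.prems(4) that by (intro borel_measurable_sum) (auto intro!: borel_measurable_times)
  have SucS: "(\<Sum>i<Suc n. c i * g i x) = (\<Sum>i<n. c i * g i x) + c n * g n x" for c x
    by simp
  show ?case
  proof (cases "\<exists>c'. L2n M (\<lambda>x. g n x - (\<Sum>i<n. c' i * g i x)) = 0")
    case True
    then obtain c' where c': "L2n M (\<lambda>x. g n x - (\<Sum>i<n. c' i * g i x)) = 0" by blast
    have "\<forall>e>0. \<exists>d. L2n M (\<lambda>x. f x - (\<Sum>i<n. d i * g i x)) < ennreal e"
    proof (intro allI impI)
      fix e :: real assume e: "e > 0"
      have e4: "e/4 > 0" using e by simp
      obtain c where c: "L2n M (\<lambda>x. f x - (\<Sum>i<Suc n. c i * g i x)) < ennreal (e/4)"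
        using fap e4 by blast
      define d where "d = (\<lambda>i. c i + c n * c' i)"
      have eq: "f x - (\<Sum>i<n. d i * g i x) = (f x - (\<Sum>i<Suc n. c i * g i x)) + c n * (g n x - (\<Sum>i<n. c' i * g i x))" for x
        unfolding d_def SucS by (simp add: sum.distrib algebra_simps sum_distrib_left)
      have m1: "(\<lambda>x. f x - (\<Sum>i<Suc n. c i * g i x)) \<in> borel_measurable M"
        using fm Sm[of "Suc n" c] by auto
      have m2: "(\<lambda>x. g n x - (\<Sum>i<n. c' i * g i x)) \<in> borel_measurable M"
        using hm Sm[of n c'] by auto
      have "L2n M (\<lambda>x. f x - (\<Sum>i<n. d i * g i x)) \<le> 2 * L2n M (\<lambda>x. f x - (\<Sum>i<Suc n. c i * g i x)) + 2 * L2n M (\<lambda>x. c n * (g n x - (\<Sum>i<n. c' i * g i x)))"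
        unfolding eq by (rule L2n_add) (use m1 m2 in auto)
      also have "\<dots> = 2 * L2n M (\<lambda>x. f x - (\<Sum>i<Suc n. c i * g i x)) + 2 * 0"
        using L2n_scale[OF m2, of "c n"] c' by simp
      also have "\<dots> < ennreal (4 * (e/4))"
        by (rule ennreal_helper1[OF c]) (use e in auto)
      finally show "\<exists>d. L2n M (\<lambda>x. f x - (\<Sum>i<n. d i * g i x)) < ennreal e" by auto
    qed
    then obtain cs where cs: "L2n M (\<lambda>x. f x - (\<Sum>i<n. cs i * g i x)) = 0"
      using Suc.IH[OF fm fN _ gm] by blast
    have "(\<Sum>i<Suc n. (cs(n:=0)) i * g i x) = (\<Sum>i<n. cs i * g i x)" for x
    proof -
      have "(\<Sum>i<n. (cs(n:=0)) i * g i x) = (\<Sum>i<n. cs i * g i x)" by (intro sum.cong) auto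
      thus ?thesis unfolding SucS by simp
    qed
    then show ?thesis using cs by (intro exI[of _ "cs(n:=0)"]) simp
  next
    case False
    have "\<not> (\<forall>e>0. \<exists>c'. L2n M (\<lambda>x. g n x - (\<Sum>i<n. c' i * g i x)) < ennreal e)"
      using Suc.IH[OF hm hN _ gm] False by blast
    then obtain e0 where e0: "e0 > 0" "\<And>c'. ennreal e0 \<le> L2n M (\<lambda>x. g n x - (\<Sum>i<n. c' i * g i x))"
      by (auto simp: not_less)
    define B where "B = enn2real (2 * L2n M f + 2)"
    have Bfin: "2 * L2n M f + 2 = ennreal B" using fN unfolding B_def
      by (simp add: ennreal_mult_less_top ennreal_enn2real_if ennreal_mult_eq_top_iff)
    have bound: "(cmod (c n))\<^sup>2 * e0 \<le> B" if c: "L2n M (\<lambda>x. f x - (\<Sum>i<Suc n. c i * g i x)) < 1" for c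
    proof (cases "c n = 0")
      case True then show ?thesis by (simp add: B_def)
    next
      case False
      define c' where "c' = (\<lambda>i. - c i / c n)"
      have eq: "(\<Sum>i<Suc n. c i * g i x) = c n * (g n x - (\<Sum>i<n. c' i * g i x))" for x
        unfolding SucS c'_def using False
        by (simp add: algebra_simps sum_distrib_left sum_subtractf sum_negf)
      have m2: "(\<lambda>x. g n x - (\<Sum>i<n. c' i * g i x)) \<in> borel_measurable M"
        using hm Sm[of n c'] by auto
      have m1: "(\<lambda>x. f x - (\<Sum>i<Suc n. c i * g i x)) \<in> borel_measurable M"
        using fm Sm[of "Suc n" c] by auto
      have "ennreal ((cmod (c n))\<^sup>2) * ennreal e0 \<le> L2n M (\<lambda>x. \<Sum>i<Suc n. c i * g i x)"
        unfolding eq L2n_scale[OF m2] by (intro mult_left_mono e0) auto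
      also have "\<dots> = L2n M (\<lambda>x. f x + - (f x - (\<Sum>i<Suc n. c i * g i x)))" by simp
      also have "\<dots> \<le> 2 * L2n M f + 2 * L2n M (\<lambda>x. - (f x - (\<Sum>i<Suc n. c i * g i x)))"
        by (rule L2n_add, rule fm, rule borel_measurable_uminus[OF m1])
      also have "\<dots> \<le> 2 * L2n M f + 2 * 1"
        using c unfolding L2n_minus by (intro add_left_mono mult_left_mono) auto
      also have "\<dots> = ennreal B" using Bfin by simp
      finally have "ennreal ((cmod (c n))\<^sup>2 * e0) \<le> ennreal B" using e0 by (simp add: ennreal_mult)
      thus ?thesis by (simp add: ennreal_le_iff B_def)
    qed
    define rad where "rad = sqrt (B / e0)"
    have "\<forall>k. \<exists>c. L2n M (\<lambda>x. f x - (\<Sum>i<Suc n. c i * g i x)) < ennreal (1 / Suc k)"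
      using fap by auto
    then obtain cs where cs: "\<And>k. L2n M (\<lambda>x. f x - (\<Sum>i<Suc n. cs k i * g i x)) < ennreal (1 / Suc k)"
      by metis
    have csb: "cs k n \<in> cball 0 rad" for k
    proof -
      have "ennreal (1 / Suc k) \<le> 1" by (simp add: ennreal_le_1)
      hence "(cmod (cs k n))\<^sup>2 * e0 \<le> B" using bound cs[of k] by (meson less_le_trans)
      hence "(cmod (cs k n))\<^sup>2 \<le> B / e0" using e0 by (simp add: pos_le_divide_eq)
      hence "cmod (cs k n) \<le> rad" unfolding rad_def by (simp add: real_le_rsqrt)
      thus ?thesis by simp
    qed
    have sc: "\<forall>f::nat\<Rightarrow>complex. (\<forall>n. f n \<in> cball 0 rad) \<longrightarrow> (\<exists>l\<in>cball 0 rad. \<exists>r. strict_mono r \<and> (f \<circ> r) \<longlonglongrightarrow> l)"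
      using compact_imp_seq_compact[OF compact_cball[of 0 rad]] unfolding seq_compact_def .
    have csb': "\<forall>k. (\<lambda>k. cs k n) k \<in> cball 0 rad" using csb by blast
    obtain l r where r: "strict_mono r" and lim: "((\<lambda>k. cs k n) \<circ> r) \<longlonglongrightarrow> l"
      using mp[OF spec[OF sc, of "\<lambda>k. cs k n"] csb'] by blast
    define f' where "f' = (\<lambda>x. f x - l * g n x)"
    have f'm: "f' \<in> borel_measurable M" unfolding f'_def using fm hm by auto
    have f'N: "L2n M f' < \<infinity>"
    proof -
      have "L2n M f' = L2n M (\<lambda>x. f x + (- l) * g n x)" unfolding f'_def by simp
      also have "\<dots> \<le> 2 * L2n M f + 2 * L2n M (\<lambda>x. (- l) * g n x)"
        by (rule L2n_add) (use fm hm in auto)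
      also have "\<dots> < \<infinity>" using fN hN unfolding L2n_scale[OF hm]
        by (simp add: ennreal_mult_less_top)
      finally show ?thesis .
    qed
    define Nh where "Nh = enn2real (L2n M (g n))"
    have Nh: "L2n M (g n) = ennreal Nh" "Nh \<ge> 0" using hN unfolding Nh_def
      by (auto simp: ennreal_enn2real_if)
    have "\<forall>e>0. \<exists>d. L2n M (\<lambda>x. f' x - (\<Sum>i<n. d i * g i x)) < ennreal e"
    proof (intro allI impI)
      fix e :: real assume e: "e > 0"
      define \<delta> where "\<delta> = sqrt (e / (4 * (Nh + 1)))"
      have \<delta>: "\<delta> > 0" unfolding \<delta>_def using e Nh by auto
      have ev1: "eventually (\<lambda>j. dist (cs (r j) n) l < \<delta>) sequentially"
        using lim \<delta> unfolding tendsto_iff by (auto simp: o_def)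
      obtain j0 :: nat where j0': "inverse (real (Suc j0)) < e/4"
        using reals_Archimedean[of "e/4"] e by auto
      hence j0: "1 / real (Suc j0) < e/4" by (simp add: inverse_eq_divide)
      have ev2: "eventually (\<lambda>j. j \<ge> j0) sequentially" by (rule eventually_ge_at_top)
      obtain J where "\<forall>j\<ge>J. dist (cs (r j) n) l < \<delta> \<and> j \<ge> j0"
        using eventually_conj[OF ev1 ev2] unfolding eventually_sequentially by blast
      then obtain j where j1: "dist (cs (r j) n) l < \<delta>" and j2: "j \<ge> j0" by blast
      have rj: "r j \<ge> j0" using j2 seq_suble[OF r, of j] by linarith
      have s1: "1 / real (Suc (r j)) \<le> 1 / Suc j0" using rj by (simp add: frac_le)
      define c where "c = cs (r j)"
      have eq: "f' x - (\<Sum>i<n. c i * g i x) = (f x - (\<Sum>i<Suc n. c i * g i x)) + (c n - l) * g n x" for x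
        unfolding f'_def SucS by (simp add: algebra_simps)
      have m1: "(\<lambda>x. f x - (\<Sum>i<Suc n. c i * g i x)) \<in> borel_measurable M"
        using fm Sm[of "Suc n" c] by auto
      have X: "L2n M (\<lambda>x. f x - (\<Sum>i<Suc n. c i * g i x)) < ennreal (e/4)"
      proof -
        have "ennreal (1 / real (Suc (r j))) \<le> ennreal (e/4)" using s1 j0 by (intro ennreal_leI) linarith
        thus ?thesis using less_le_trans[OF cs[of "r j"]] unfolding c_def by blast
      qed
      have dd: "(cmod (c n - l))\<^sup>2 \<le> \<delta>\<^sup>2" using j1 unfolding c_def dist_norm
        by (simp add: power_mono less_imp_le)
      have "\<delta>\<^sup>2 = e / (4 * (Nh + 1))" unfolding \<delta>_def using e Nh by simp
      hence "(cmod (c n - l))\<^sup>2 * Nh \<le> e / 4"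
      proof -
        assume d2: "\<delta>\<^sup>2 = e / (4 * (Nh + 1))"
        have "(cmod (c n - l))\<^sup>2 * Nh \<le> \<delta>\<^sup>2 * (Nh + 1)"
          using dd Nh by (intro mult_mono) auto
        also have "\<dots> = e/4" using d2 Nh by (simp add: field_simps)
        finally show ?thesis .
      qed
      hence Y: "L2n M (\<lambda>x. (c n - l) * g n x) \<le> ennreal (e/4)"
        unfolding L2n_scale[OF hm] Nh using Nh by (simp add: ennreal_mult[symmetric] ennreal_leI)
      have "L2n M (\<lambda>x. f' x - (\<Sum>i<n. c i * g i x)) \<le> 2 * L2n M (\<lambda>x. f x - (\<Sum>i<Suc n. c i * g i x)) + 2 * L2n M (\<lambda>x. (c n - l) * g n x)"
        unfolding eq by (rule L2n_add) (use m1 hm in auto)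
      also have "\<dots> < ennreal (4 * (e/4))" by (rule ennreal_helper1[OF X Y]) (use e in auto)
      finally show "\<exists>d. L2n M (\<lambda>x. f' x - (\<Sum>i<n. d i * g i x)) < ennreal e" by auto
    qed
    then obtain cs' where cs': "L2n M (\<lambda>x. f' x - (\<Sum>i<n. cs' i * g i x)) = 0"
      using Suc.IH[OF f'm f'N _ gm] by blast
    have "f x - (\<Sum>i<Suc n. (cs'(n:=l)) i * g i x) = f' x - (\<Sum>i<n. cs' i * g i x)" for x
    proof -
      have "(\<Sum>i<n. (cs'(n:=l)) i * g i x) = (\<Sum>i<n. cs' i * g i x)" by (intro sum.cong) auto
      thus ?thesis unfolding SucS f'_def by simp
    qed
    then show ?thesis using cs' by (intro exI[of _ "cs'(n:=l)"]) (simp only:)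
  qed
qed




lemma qp_lb: "x \<in> qp p \<Longrightarrow> \<exists>g. \<forall>j<g. x j = 0" unfolding qp_def by auto
lemma qp_lt: "x \<in> qp p \<Longrightarrow> x j < p" unfolding qp_def by auto

lemma qp_fin: assumes "x \<in> qp p" shows "finite {j. j < n \<and> x j \<noteq> 0}"
proof -
  obtain g where g: "\<forall>j<g. x j = 0" using qp_lb[OF assms] by blast
  have "{j. j < n \<and> x j \<noteq> 0} \<subseteq> {g..<n}" using g by (auto simp: not_less[symmetric])
  thus ?thesis by (rule finite_subset) simp
qed

lemma tr_step:
  assumes "x \<in> qp p"
  shows "qp_trunc p x (n+1) = qp_trunc p x n + real (x n) * real p powi n"
proof (cases "x n = 0")
  case True
  hence "{j. j < n+1 \<and> x j \<noteq> 0} = {j. j < n \<and> x j \<noteq> 0}" by (auto simp: zless_add1_eq le_less)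
  thus ?thesis using True unfolding qp_trunc_def by simp
next
  case False
  hence "{j. j < n+1 \<and> x j \<noteq> 0} = insert n {j. j < n \<and> x j \<noteq> 0}" by (auto simp: zless_add1_eq)
  thus ?thesis using qp_fin[OF assms, of n] unfolding qp_trunc_def by (simp add: add.commute)
qed

lemma tr_low: "\<forall>j<g. x j = 0 \<Longrightarrow> n \<le> g \<Longrightarrow> qp_trunc p x n = 0"
  unfolding qp_trunc_def by (rule sum.neutral) auto

lemma tr_zero[simp]: "qp_trunc p qp_zero n = 0"
  unfolding qp_trunc_def qp_zero_def by simp

lemma qp_zero_in: "p > 0 \<Longrightarrow> qp_zero \<in> qp p" unfolding qp_def qp_zero_def by auto

lemma tr_bounds:
  assumes p: "p \<ge> 2" and x: "x \<in> qp p"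
  shows "0 \<le> qp_trunc p x n \<and> qp_trunc p x n < real p powi n"
proof -
  obtain g where g: "\<forall>j<g. x j = 0" using qp_lb[OF x] by blast
  define g' where "g' = min g n"
  have g': "\<forall>j<g'. x j = 0" "g' \<le> n" using g unfolding g'_def by auto
  have "g' \<le> n" by fact
  thus ?thesis
  proof (induction n rule: int_ge_induct)
    case base
    then show ?case using tr_low[OF g'(1)] p by simp
  next
    case (step i)
    have xi: "real (x i) \<le> real p - 1" using qp_lt[OF x, of i] by linarith
    have pi: "real p powi i > 0" using p by simp
    have "qp_trunc p x (i+1) = qp_trunc p x i + real (x i) * real p powi i" by (rule tr_step[OF x])
    moreover have "real (x i) * real p powi i \<le> (real p - 1) * real p powi i"
      using xi pi by (intro mult_right_mono) auto
    moreover have "real p powi (i+1) = real p * real p powi i" using p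
      by (simp add: power_int_add)
    ultimately show ?case using step.IH pi by (auto simp: algebra_simps)
  qed
qed

definition pm :: "nat \<Rightarrow> int \<Rightarrow> real \<Rightarrow> bool" where
  "pm p m r \<longleftrightarrow> (\<exists>k::int. r = of_int k * real p powi m)"

lemma pm_add: assumes "pm p m a" "pm p m b" shows "pm p m (a + b)"
proof -
  obtain k l where "a = of_int k * real p powi m" "b = of_int l * real p powi m"
    using assms unfolding pm_def by blast
  hence "a + b = of_int (k + l) * real p powi m" by (simp add: algebra_simps)
  thus ?thesis unfolding pm_def by blast
qed
lemma pm_uminus: "pm p m a \<Longrightarrow> pm p m (- a)"
  unfolding pm_def by (auto intro: exI[of _ "- _"])
lemma pm_diff: "pm p m a \<Longrightarrow> pm p m b \<Longrightarrow> pm p m (a - b)"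
  using pm_add pm_uminus by fastforce
lemma pm_eq: "pm p m a \<Longrightarrow> b = a \<Longrightarrow> pm p m b" by simp
lemma pm_0: "pm p m 0" unfolding pm_def by (auto intro: exI[of _ 0])
lemma pm_mono:
  assumes "p \<ge> 2" "pm p n a" "m \<le> n" shows "pm p m a"
proof -
  obtain k where k: "a = of_int k * real p powi n" using assms unfolding pm_def by blast
  have "real p powi n = real p ^ nat (n - m) * real p powi m"
    using assms by (simp add: power_int_add[symmetric] power_int_of_nat[symmetric])
  hence "a = of_int (k * p ^ nat (n-m)) * real p powi m" using k by simp
  thus ?thesis unfolding pm_def by blast
qed

lemma tr_diff_pm:
  assumes p: "p \<ge> 2" and x: "x \<in> qp p" and mn: "m \<le> n"
  shows "pm p m (qp_trunc p x n - qp_trunc p x m)"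
  using mn
proof (induction n rule: int_ge_induct)
  case base then show ?case by (simp add: pm_0)
next
  case (step i)
  have "pm p i (real (x i) * real p powi i)" unfolding pm_def by (auto intro: exI[of _ "int (x i)"])
  hence "pm p m (real (x i) * real p powi i)" using pm_mono[OF p _ step.hyps] by blast
  hence "pm p m ((qp_trunc p x i - qp_trunc p x m) + real (x i) * real p powi i)"
    by (rule pm_add[OF step.IH])
  moreover have "qp_trunc p x (i+1) - qp_trunc p x m = (qp_trunc p x i - qp_trunc p x m) + real (x i) * real p powi i"
    using tr_step[OF x, of i] by simp
  ultimately show ?case by metis
qed

lemma rmod_bounds: assumes "M > 0" shows "0 \<le> rmod a M" "rmod a M < M"
proof -
  have "of_int \<lfloor>a/M\<rfloor> * M \<le> a" "a < (of_int \<lfloor>a/M\<rfloor> + 1) * M"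
    using floor_divide_lower[OF assms] floor_divide_upper[OF assms] by auto
  hence "M * of_int \<lfloor>a/M\<rfloor> \<le> a" "a < M * of_int \<lfloor>a/M\<rfloor> + M" using assms
    by (auto simp: algebra_simps)
  thus "0 \<le> rmod a M" "rmod a M < M" unfolding rmod_def by auto
qed

lemma rmod_eqI:
  assumes "M > 0" "0 \<le> b" "b < M" "a = b + of_int k * M"
  shows "rmod a M = b"
proof -
  have "a / M = b / M + of_int k" using assms by (simp add: field_simps)
  moreover have "0 \<le> b / M" "b / M < 1" using assms by auto
  ultimately have "\<lfloor>a/M\<rfloor> = k" by (simp add: floor_eq_iff)
  thus ?thesis unfolding rmod_def using assms by simp
qed

lemma rmod_decomp: "a = rmod a M + of_int \<lfloor>a/M\<rfloor> * M"
  unfolding rmod_def by simp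

lemma rmod_pm: "pm p m (a - rmod a (real p powi m))"
  unfolding pm_def rmod_def by (auto intro: exI[of _ "\<lfloor>_\<rfloor>"])

lemma rmod_zero[simp]: "rmod 0 M = 0" unfolding rmod_def by simp

lemma rmod_eq_pm:
  assumes p: "p \<ge> 2" and "0 \<le> b" "b < real p powi m" "pm p m (a - b)"
  shows "rmod a (real p powi m) = b"
proof -
  obtain k where "a - b = of_int k * real p powi m" using assms unfolding pm_def by blast
  thus ?thesis using assms by (intro rmod_eqI[where k=k]) auto
qed

lemma tr_rmod:
  assumes p: "p \<ge> 2" and x: "x \<in> qp p" and km: "k \<le> m"
  shows "qp_trunc p x k = rmod (qp_trunc p x m) (real p powi k)"
  using tr_bounds[OF p x, of k] tr_diff_pm[OF p x km]
  by (intro rmod_eq_pm[OF p, symmetric]) auto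

lemma tr_eq_iff:
  assumes p: "p \<ge> 2" and x: "x \<in> qp p" and y: "y \<in> qp p"
  shows "(\<forall>j<m. x j = y j) \<longleftrightarrow> qp_trunc p x m = qp_trunc p y m"
proof
  assume "\<forall>j<m. x j = y j"
  hence "{j. j < m \<and> x j \<noteq> 0} = {j. j < m \<and> y j \<noteq> 0}" by auto
  thus "qp_trunc p x m = qp_trunc p y m" unfolding qp_trunc_def using \<open>\<forall>j<m. x j = y j\<close>
    by (intro sum.cong) auto
next
  assume eq: "qp_trunc p x m = qp_trunc p y m"
  show "\<forall>j<m. x j = y j"
  proof (intro allI impI)
    fix j assume "j < m"
    hence "j + 1 \<le> m" "j \<le> m" by auto
    have e1: "qp_trunc p x (j+1) = qp_trunc p y (j+1)"
      using tr_rmod[OF p x \<open>j+1 \<le> m\<close>] tr_rmod[OF p y \<open>j+1 \<le> m\<close>] eq by simp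
    have e2: "qp_trunc p x j = qp_trunc p y j"
      using tr_rmod[OF p x \<open>j \<le> m\<close>] tr_rmod[OF p y \<open>j \<le> m\<close>] eq by simp
    have "real (x j) * real p powi j = real (y j) * real p powi j"
      using tr_step[OF x, of j] tr_step[OF y, of j] e1 e2 by linarith
    moreover have "real p powi j \<noteq> 0" using p by simp
    ultimately have "real (x j) = real (y j)" using p by simp
    thus "x j = y j" by simp
  qed
qed

lemma digits_of_R:
  assumes p: "p \<ge> 2" and R0: "\<And>n. n \<le> g \<Longrightarrow> R n = 0"
    and Rpm: "\<And>m n. m \<le> n \<Longrightarrow> pm p m (R n - R m)"
  shows "(\<lambda>j. nat \<lfloor>rmod (R (j+1)) (real p powi (j+1)) / real p powi j\<rfloor>) \<in> qp p" (is "?d \<in> _")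
    and "qp_trunc p (\<lambda>j. nat \<lfloor>rmod (R (j+1)) (real p powi (j+1)) / real p powi j\<rfloor>) n = rmod (R n) (real p powi n)"
proof -
  have Pp: "real p powi k > 0" for k using p by simp
  have dlt: "?d j < p" for j
  proof -
    let ?r = "rmod (R (j+1)) (real p powi (j+1))"
    have r: "0 \<le> ?r" "?r < real p powi (j+1)" using rmod_bounds[OF Pp] by auto
    have "real p powi (j+1) = real p * real p powi j" using p by (simp add: power_int_add)
    hence "?r / real p powi j < real p" using r Pp[of j] by (simp add: divide_less_eq)
    hence "\<lfloor>?r / real p powi j\<rfloor> < int p" by linarith
    thus ?thesis using p by linarith
  qed
  have d0: "\<forall>j<g. ?d j = 0" using R0 by simp
  show dq: "?d \<in> qp p" unfolding qp_def using dlt d0 by blast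
  show "qp_trunc p ?d n = rmod (R n) (real p powi n)"
  proof (cases "n \<le> g")
    case True
    then show ?thesis using tr_low[OF d0 True] R0[OF True] by simp
  next
    case False
    hence "g \<le> n" by simp
    thus ?thesis
    proof (induction n rule: int_ge_induct)
      case base
      then show ?case using tr_low[OF d0, of g] R0[of g] by simp
    next
      case (step i)
      define r' where "r' = rmod (R (i+1)) (real p powi (i+1))"
      define q where "q = \<lfloor>r' / real p powi i\<rfloor>"
      have r'0: "0 \<le> r'" unfolding r'_def using rmod_bounds[OF Pp] by auto
      have q0: "q \<ge> 0" unfolding q_def using r'0 Pp[of i] by simp
      have dq': "real (?d i) = of_int q" unfolding q_def r'_def using q0 unfolding q_def r'_def by simp
      have eqm: "r' - of_int q * real p powi i = rmod r' (real p powi i)"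
        unfolding rmod_def q_def by simp
      have "rmod (R i) (real p powi i) = r' - of_int q * real p powi i"
      proof (rule rmod_eq_pm[OF p])
        show "0 \<le> r' - of_int q * real p powi i" "r' - of_int q * real p powi i < real p powi i"
          unfolding eqm using rmod_bounds[OF Pp] by auto
        have a1: "pm p i (R (i+1) - R i)" by (rule Rpm) simp
        have a2: "pm p i (R (i+1) - r')" unfolding r'_def
          by (rule pm_mono[OF p rmod_pm]) simp
        have a3: "pm p i (of_int q * real p powi i)" unfolding pm_def by blast
        have "R i - (r' - of_int q * real p powi i) = (R (i+1) - r') - (R (i+1) - R i) + of_int q * real p powi i"
          by simp
        thus "pm p i (R i - (r' - of_int q * real p powi i))"
          by (rule pm_eq[OF pm_add[OF pm_diff[OF a2 a1] a3]])
      qed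
      then show ?case using tr_step[OF dq, of i] step.IH dq' unfolding r'_def by simp
    qed
  qed
qed

definition qp_add :: "nat \<Rightarrow> (int \<Rightarrow> nat) \<Rightarrow> (int \<Rightarrow> nat) \<Rightarrow> (int \<Rightarrow> nat)" where
  "qp_add p x y = (\<lambda>j. nat \<lfloor>rmod (qp_trunc p x (j+1) + qp_trunc p y (j+1)) (real p powi (j+1))
                          / real p powi j\<rfloor>)"

lemma diff_props:
  assumes p: "p \<ge> 2" and x: "x \<in> qp p" and y: "y \<in> qp p"
  shows "qp_diff p x y \<in> qp p"
    and "qp_trunc p (qp_diff p x y) n = rmod (qp_trunc p x n - qp_trunc p y n) (real p powi n)"
proof -
  obtain gx where gx: "\<forall>j<gx. x j = 0" using qp_lb[OF x] by blast
  obtain gy where gy: "\<forall>j<gy. y j = 0" using qp_lb[OF y] by blast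
  have gx': "\<forall>j<min gx gy. x j = 0" and gy': "\<forall>j<min gx gy. y j = 0" using gx gy by auto
  have R0: "\<And>n. n \<le> min gx gy \<Longrightarrow> qp_trunc p x n - qp_trunc p y n = 0"
    using tr_low[OF gx'] tr_low[OF gy'] by simp
  have Rpm: "\<And>m n. m \<le> n \<Longrightarrow> pm p m ((qp_trunc p x n - qp_trunc p y n) - (qp_trunc p x m - qp_trunc p y m))"
  proof -
    fix m n :: int assume "m \<le> n"
    have "(qp_trunc p x n - qp_trunc p y n) - (qp_trunc p x m - qp_trunc p y m) =
      (qp_trunc p x n - qp_trunc p x m) - (qp_trunc p y n - qp_trunc p y m)" by simp
    thus "pm p m ((qp_trunc p x n - qp_trunc p y n) - (qp_trunc p x m - qp_trunc p y m))"
      by (rule pm_eq[OF pm_diff[OF tr_diff_pm[OF p x \<open>m \<le> n\<close>] tr_diff_pm[OF p y \<open>m \<le> n\<close>]]])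
  qed
  show "qp_diff p x y \<in> qp p"
    unfolding qp_diff_def by (rule digits_of_R(1)[OF p R0 Rpm])
  show "qp_trunc p (qp_diff p x y) n = rmod (qp_trunc p x n - qp_trunc p y n) (real p powi n)"
    unfolding qp_diff_def by (rule digits_of_R(2)[OF p R0 Rpm])
qed

lemma add_props:
  assumes p: "p \<ge> 2" and x: "x \<in> qp p" and y: "y \<in> qp p"
  shows "qp_add p x y \<in> qp p"
    and "qp_trunc p (qp_add p x y) n = rmod (qp_trunc p x n + qp_trunc p y n) (real p powi n)"
proof -
  obtain gx where gx: "\<forall>j<gx. x j = 0" using qp_lb[OF x] by blast
  obtain gy where gy: "\<forall>j<gy. y j = 0" using qp_lb[OF y] by blast
  have gx': "\<forall>j<min gx gy. x j = 0" and gy': "\<forall>j<min gx gy. y j = 0" using gx gy by auto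
  have R0: "\<And>n. n \<le> min gx gy \<Longrightarrow> qp_trunc p x n + qp_trunc p y n = 0"
    using tr_low[OF gx'] tr_low[OF gy'] by simp
  have Rpm: "\<And>m n. m \<le> n \<Longrightarrow> pm p m ((qp_trunc p x n + qp_trunc p y n) - (qp_trunc p x m + qp_trunc p y m))"
  proof -
    fix m n :: int assume "m \<le> n"
    have "(qp_trunc p x n + qp_trunc p y n) - (qp_trunc p x m + qp_trunc p y m) =
      (qp_trunc p x n - qp_trunc p x m) + (qp_trunc p y n - qp_trunc p y m)" by simp
    thus "pm p m ((qp_trunc p x n + qp_trunc p y n) - (qp_trunc p x m + qp_trunc p y m))"
      by (rule pm_eq[OF pm_add[OF tr_diff_pm[OF p x \<open>m \<le> n\<close>] tr_diff_pm[OF p y \<open>m \<le> n\<close>]]])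
  qed
  show "qp_add p x y \<in> qp p"
    unfolding qp_add_def by (rule digits_of_R(1)[OF p R0 Rpm])
  show "qp_trunc p (qp_add p x y) n = rmod (qp_trunc p x n + qp_trunc p y n) (real p powi n)"
    unfolding qp_add_def by (rule digits_of_R(2)[OF p R0 Rpm])
qed

lemma diff_cyl:
  assumes p: "p \<ge> 2" and y: "y \<in> qp p" and a: "a \<in> qp p" and b: "b \<in> qp p"
  shows "(\<forall>j<m. qp_diff p y a j = b j) \<longleftrightarrow> (\<forall>j<m. y j = qp_add p b a j)"
proof -
  let ?Y = "qp_trunc p y m" and ?A = "qp_trunc p a m" and ?B = "qp_trunc p b m" and ?M = "real p powi m"
  have "(\<forall>j<m. qp_diff p y a j = b j) \<longleftrightarrow> rmod (?Y - ?A) ?M = ?B"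
    using tr_eq_iff[OF p diff_props(1)[OF p y a] b] diff_props(2)[OF p y a] by simp
  moreover have "(\<forall>j<m. y j = qp_add p b a j) \<longleftrightarrow> ?Y = rmod (?B + ?A) ?M"
    using tr_eq_iff[OF p y add_props(1)[OF p b a]] add_props(2)[OF p b a] by simp
  moreover have "rmod (?Y - ?A) ?M = ?B \<longleftrightarrow> ?Y = rmod (?B + ?A) ?M"
  proof
    assume h: "rmod (?Y - ?A) ?M = ?B"
    have "pm p m ((?Y - ?A) - ?B)" using rmod_pm[of p m "?Y - ?A"] h by simp
    hence "pm p m ((?B + ?A) - ?Y)" by (rule pm_eq[OF pm_uminus]) linarith
    thus "?Y = rmod (?B + ?A) ?M" using tr_bounds[OF p y, of m] by (intro rmod_eq_pm[OF p, symmetric]) auto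
  next
    assume h: "?Y = rmod (?B + ?A) ?M"
    have "pm p m ((?B + ?A) - ?Y)" using rmod_pm[of p m "?B + ?A"] h by simp
    hence "pm p m ((?Y - ?A) - ?B)" by (rule pm_eq[OF pm_uminus]) linarith
    thus "rmod (?Y - ?A) ?M = ?B" using tr_bounds[OF p b, of m] by (intro rmod_eq_pm[OF p]) auto
  qed
  ultimately show ?thesis by simp
qed

lemma add_zero:
  assumes p: "p \<ge> 2" and a: "a \<in> qp p"
  shows "qp_add p qp_zero a = a"
proof
  fix j
  have z: "qp_zero \<in> qp p" using qp_zero_in p by simp
  have "qp_trunc p (qp_add p qp_zero a) (j+1) = qp_trunc p a (j+1)"
    unfolding add_props(2)[OF p z a] using tr_bounds[OF p a, of "j+1"]
    by (simp add: rmod_eq_pm[OF p] pm_0)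
  thus "qp_add p qp_zero a j = a j"
    using tr_eq_iff[OF p add_props(1)[OF p z a] a, of "j+1"] by simp
qed

lemma norm_le:
  assumes p: "p \<ge> 2" and z: "z \<in> qp p"
  shows "qp_norm p z \<le> real p powr real_of_int g \<longleftrightarrow> (\<forall>j < -g. z j = 0)"
proof (cases "z = qp_zero")
  case True
  then show ?thesis unfolding qp_norm_def qp_zero_def by simp
next
  case False
  then obtain j1 where j1: "z j1 \<noteq> 0" unfolding qp_zero_def by auto
  obtain g0 where g0: "\<forall>j<g0. z j = 0" using qp_lb[OF z] by blast
  have "j1 \<ge> g0" using g0 j1 by (meson not_less)
  define S where "S = {k::nat. z (g0 + int k) \<noteq> 0}"
  have "nat (j1 - g0) \<in> S" unfolding S_def using j1 \<open>j1 \<ge> g0\<close> by simp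
  define k0 where "k0 = (LEAST k. k \<in> S)"
  have k0S: "k0 \<in> S" unfolding k0_def by (rule LeastI) fact
  define L where "L = g0 + int k0"
  have zL: "z L \<noteq> 0" using k0S unfolding L_def S_def by simp
  have below: "\<forall>j<L. z j = 0"
  proof (intro allI impI)
    fix j assume "j < L"
    show "z j = 0"
    proof (cases "j < g0")
      case True thus ?thesis using g0 by simp
    next
      case False
      hence "nat (j - g0) < k0" using \<open>j < L\<close> unfolding L_def by linarith
      hence "nat (j - g0) \<notin> S" unfolding k0_def by (rule not_less_Least)
      thus ?thesis unfolding S_def using False by simp
    qed
  qed
  have "(LEAST j. z j \<noteq> 0) = L"
    by (rule Least_equality) (use zL below in \<open>auto simp: not_less[symmetric]\<close>)
  hence nz: "qp_norm p z = real p powr (- real_of_int L)" unfolding qp_norm_def using False by simp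
  have "real p powr (- real_of_int L) \<le> real p powr real_of_int g \<longleftrightarrow> - L \<le> g"
  proof -
    have P1: "real p > 1" using p by simp
    show ?thesis by (simp only: powr_le_cancel_iff[OF P1] of_int_minus[symmetric] of_int_le_iff)
  qed
  also have "\<dots> \<longleftrightarrow> (\<forall>j < -g. z j = 0)"
  proof
    assume "- L \<le> g"
    thus "\<forall>j < -g. z j = 0" using below by auto
  next
    assume h: "\<forall>j < -g. z j = 0"
    show "- L \<le> g"
    proof (rule ccontr)
      assume "\<not> - L \<le> g"
      hence "L < -g" by simp
      thus False using h zL by auto
    qed
  qed
  finally show ?thesis using nz by simp
qed

lemma ball_eq:
  assumes p: "p \<ge> 2" and a: "a \<in> qp p"
  shows "qp_ball p g a = {x \<in> qp p. \<forall>j < -g. x j = a j}"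
proof -
  have z: "qp_zero \<in> qp p" using qp_zero_in p by simp
  have "x \<in> qp_ball p g a \<longleftrightarrow> (\<forall>j < -g. x j = a j)" if x: "x \<in> qp p" for x
  proof -
    have "x \<in> qp_ball p g a \<longleftrightarrow> (\<forall>j < -g. qp_diff p x a j = qp_zero j)"
      unfolding qp_ball_def using x norm_le[OF p diff_props(1)[OF p x a]] by (simp add: qp_zero_def)
    also have "\<dots> \<longleftrightarrow> (\<forall>j < -g. x j = qp_add p qp_zero a j)" by (rule diff_cyl[OF p x a z])
    finally show ?thesis using add_zero[OF p a] by simp
  qed
  thus ?thesis unfolding qp_ball_def by auto
qed




abbreviation "Fl p t n \<equiv> \<lfloor>t * real p powi n\<rfloor>"

lemma Fl_div:
  assumes p: "p \<ge> 2"
  shows "Fl p t (n+1) div int p = Fl p t n"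
proof -
  have "t * real p powi (n+1) / real_of_int (int p) = t * real p powi n"
    using p by (simp add: power_int_add)
  thus ?thesis using floor_divide_real_eq_div[of "int p" "t * real p powi (n+1)"] by simp
qed

lemma Fl_step:
  assumes p: "p \<ge> 2"
  shows "Fl p t (n+1) = int p * Fl p t n + Fl p t (n+1) mod int p"
  using Fl_div[OF p, of t n] by (metis mult_div_mod_eq)

lemma qor_digit: "qp_of_real p t j = nat (Fl p t (j+1) mod int p)"
  unfolding qp_of_real_def by simp

lemma Fl_small:
  assumes p: "p \<ge> 2" and t: "t \<ge> 0"
  shows "\<exists>g. \<forall>n\<le>g. Fl p t n = 0"
proof -
  obtain k where k: "t < real p ^ k" using real_arch_pow[of "real p" t] p by auto
  have "Fl p t n = 0" if "n \<le> - int k" for n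
  proof -
    have "real p powi n \<le> real p powi (- int k)" using p that by (intro power_int_increasing) auto
    also have "\<dots> = 1 / real p ^ k" by (simp add: power_int_minus power_int_of_nat divide_inverse)
    finally have "t * real p powi n \<le> t * (1 / real p ^ k)" using t by (intro mult_left_mono) auto
    also have "\<dots> < 1" using k p by (simp add: divide_less_eq)
    finally show ?thesis using t p by (simp add: floor_eq_iff)
  qed
  thus ?thesis by blast
qed

lemma qor_in:
  assumes p: "p \<ge> 2" and t: "t \<ge> 0"
  shows "qp_of_real p t \<in> qp p"
proof -
  obtain g where g: "\<forall>n\<le>g. Fl p t n = 0" using Fl_small[OF p t] by blast
  have "qp_of_real p t j < p" for j unfolding qor_digit using p
    by (simp add: nat_less_iff)
  moreover have "\<forall>j<g. qp_of_real p t j = 0" unfolding qor_digit using g by auto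
  ultimately show ?thesis unfolding qp_def by blast
qed

lemma Fl_mono:
  assumes p: "p \<ge> 2" and t: "t \<ge> 0" and mn: "m \<le> n"
  shows "Fl p t m \<le> Fl p t n"
proof -
  have "real p powi m \<le> real p powi n" using p mn by (intro power_int_increasing) auto
  hence "t * real p powi m \<le> t * real p powi n" using t by (intro mult_left_mono) auto
  thus ?thesis by (rule floor_mono)
qed

lemma Fl_nonneg: "p \<ge> 2 \<Longrightarrow> t \<ge> 0 \<Longrightarrow> Fl p t m \<ge> 0" by simp

lemma monna_base:
  assumes p: "p \<ge> 2" and t: "t \<ge> 0"
  shows "(\<forall>j<m. qp_of_real p t j = 0) \<longleftrightarrow> Fl p t m = 0"
proof
  assume F: "Fl p t m = 0"
  show "\<forall>j<m. qp_of_real p t j = 0"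
  proof (intro allI impI)
    fix j assume "j < m"
    hence "Fl p t (j+1) \<le> Fl p t m" by (intro Fl_mono[OF p t]) auto
    hence "Fl p t (j+1) = 0" using F Fl_nonneg[OF p t, of "j+1"] by linarith
    thus "qp_of_real p t j = 0" unfolding qor_digit by simp
  qed
next
  assume D: "\<forall>j<m. qp_of_real p t j = 0"
  obtain g where g: "\<forall>n\<le>g. Fl p t n = 0" using Fl_small[OF p t] by blast
  have "min g m \<le> m" by simp
  have "i \<le> m \<longrightarrow> Fl p t i = 0" if "min g m \<le> i" for i
    using that
  proof (induction i rule: int_ge_induct)
    case base then show ?case using g by simp
  next
    case (step i)
    show ?case
    proof
      assume "i + 1 \<le> m"
      hence "i < m" by simp
      hence "nat (Fl p t (i+1) mod int p) = 0" using D qor_digit by metis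
      hence h0: "Fl p t (i+1) mod int p \<le> 0" by simp
      have "Fl p t (i+1) mod int p \<ge> 0" using p by simp
      hence "Fl p t (i+1) mod int p = 0" using h0 by linarith
      thus "Fl p t (i+1) = 0" using Fl_step[OF p, of t i] step.IH \<open>i < m\<close> by simp
    qed
  qed
  thus "Fl p t m = 0" using \<open>min g m \<le> m\<close> by blast
qed

lemma monna_cyl:
  assumes p: "p \<ge> 2" and b: "b \<in> qp p"
  shows "\<exists>C::int. C \<ge> 0 \<and> (\<forall>t\<ge>0. (\<forall>j<m. qp_of_real p t j = b j) \<longleftrightarrow> Fl p t m = C)"
proof -
  obtain g where g: "\<forall>j<g. b j = 0" using qp_lb[OF b] by blast
  have base: "\<exists>C::int. C \<ge> 0 \<and> (\<forall>t\<ge>0. (\<forall>j<m'. qp_of_real p t j = b j) \<longleftrightarrow> Fl p t m' = C)"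
    if "m' \<le> g" for m'
  proof -
    have "(\<forall>j<m'. qp_of_real p t j = b j) \<longleftrightarrow> (\<forall>j<m'. qp_of_real p t j = 0)" for t
      using g that by auto
    thus ?thesis using monna_base[OF p] by (intro exI[of _ 0]) auto
  qed
  have step: "\<exists>C::int. C \<ge> 0 \<and> (\<forall>t\<ge>0. (\<forall>j<g + int k. qp_of_real p t j = b j) \<longleftrightarrow> Fl p t (g + int k) = C)" for k
  proof (induction k)
    case 0 then show ?case using base[of g] by simp
  next
    case (Suc k)
    then obtain C where C: "C \<ge> 0" "\<forall>t\<ge>0. (\<forall>j<g + int k. qp_of_real p t j = b j) \<longleftrightarrow> Fl p t (g + int k) = C"
      by blast
    let ?m = "g + int k"
    have bm: "int (b ?m) < int p" using qp_lt[OF b] by simp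
    have "(\<forall>j<?m + 1. qp_of_real p t j = b j) \<longleftrightarrow> Fl p t (?m + 1) = int p * C + int (b ?m)"
      if t: "t \<ge> 0" for t
    proof -
      have "(\<forall>j<?m + 1. qp_of_real p t j = b j) \<longleftrightarrow> (\<forall>j<?m. qp_of_real p t j = b j) \<and> qp_of_real p t ?m = b ?m"
        by (auto simp: zless_add1_eq le_less)
      also have "\<dots> \<longleftrightarrow> Fl p t ?m = C \<and> Fl p t (?m+1) mod int p = int (b ?m)"
        using C(2) t unfolding qor_digit using p by (auto simp: nat_eq_iff)
      also have "\<dots> \<longleftrightarrow> Fl p t (?m + 1) = int p * C + int (b ?m)"
      proof
        assume "Fl p t ?m = C \<and> Fl p t (?m+1) mod int p = int (b ?m)"
        thus "Fl p t (?m + 1) = int p * C + int (b ?m)" using Fl_step[OF p, of t ?m] by simp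
      next
        assume h: "Fl p t (?m + 1) = int p * C + int (b ?m)"
        have "Fl p t ?m = (int p * C + int (b ?m)) div int p" using Fl_div[OF p, of t ?m] h by simp
        also have "\<dots> = C" using bm p by simp
        finally show "Fl p t ?m = C \<and> Fl p t (?m+1) mod int p = int (b ?m)"
          using h bm p by simp
      qed
      finally show ?thesis .
    qed
    note X = this
    have eq: "g + int (Suc k) = ?m + 1" by simp
    have "int p * C + int (b ?m) \<ge> 0" using C(1) by simp
    thus ?case using X by (intro exI[of _ "int p * C + int (b ?m)"]) (simp only: eq, blast)
  qed
  show ?thesis
  proof (cases "m \<le> g")
    case True then show ?thesis using base by blast
  next
    case False
    then obtain k where "m = g + int k" by (metis le_add_diff_inverse nat_le_iff_add zle_iff_zadd nle_le)
    thus ?thesis using step by blast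
  qed
qed

definition Gb :: "nat \<Rightarrow> (int \<Rightarrow> nat) set set" where
  "Gb p = {qp_ball p g a | g a. a \<in> qp p}"

lemma Gb_sub: "Gb p \<subseteq> Pow (qp p)" unfolding Gb_def qp_ball_def by auto

lemma space_qs[simp]: "space (qp_space p) = qp p"
  unfolding qp_space_def by (simp add: space_measure_of_conv)

lemma sets_qs: "sets (qp_space p) = sigma_sets (qp p) (Gb p)"
  unfolding qp_space_def Gb_def[symmetric] using Gb_sub by (simp add: sets_measure_of)

lemma ball_sets: "a \<in> qp p \<Longrightarrow> qp_ball p g a \<in> sets (qp_space p)"
  unfolding sets_qs Gb_def by (intro sigma_sets.Basic) auto

lemma space_haar[simp]: "space (haar p) = qp p" unfolding haar_def by simp
lemma sets_haar[simp]: "sets (haar p) = sets (qp_space p)" unfolding haar_def by simp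

lemma Ico_nonneg:
  assumes "0 \<le> (c::real)" "0 < Q" shows "{c/Q ..< d} \<subseteq> {0..}"
proof
  fix t assume "t \<in> {c/Q ..< d}"
  moreover have "0 \<le> c/Q" using assms by simp
  ultimately show "t \<in> {0..}" by auto
qed

lemma qor_preimage:
  assumes p: "p \<ge> 2" and a: "a \<in> qp p"
  shows "\<exists>C::int. C \<ge> 0 \<and> qp_of_real p -` qp_ball p g a \<inter> {0..} =
     {of_int C / real p powi (-g) ..< (of_int C + 1) / real p powi (-g)}"
proof -
  obtain C where C: "C \<ge> 0" "\<forall>t\<ge>0. (\<forall>j< -g. qp_of_real p t j = a j) \<longleftrightarrow> Fl p t (-g) = C"
    using monna_cyl[OF p a, of "-g"] by blast
  let ?Q = "real p powi (-g)"
  have Q: "?Q > 0" using p by simp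
  have "t \<in> qp_of_real p -` qp_ball p g a \<inter> {0..} \<longleftrightarrow> t \<in> {of_int C / ?Q ..< (of_int C + 1) / ?Q}" for t
  proof -
    have "t \<in> {of_int C / ?Q ..< (of_int C + 1) / ?Q} \<longleftrightarrow> of_int C \<le> t * ?Q \<and> t * ?Q < of_int C + 1"
      using Q by (simp add: divide_le_eq less_divide_eq)
    also have "\<dots> \<longleftrightarrow> Fl p t (-g) = C" by (simp add: floor_eq_iff)
    finally have e1: "t \<in> {of_int C / ?Q ..< (of_int C + 1) / ?Q} \<longleftrightarrow> Fl p t (-g) = C" .
    have "t \<in> {of_int C / ?Q ..< (of_int C + 1) / ?Q} \<Longrightarrow> t \<ge> 0"
      using Ico_nonneg[of "of_int C" ?Q "(of_int C + 1) / ?Q"] C(1) Q by auto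
    moreover have "t \<ge> 0 \<Longrightarrow> t \<in> qp_of_real p -` qp_ball p g a \<longleftrightarrow> Fl p t (-g) = C"
      using ball_eq[OF p a, of g] qor_in[OF p, of t] C(2) by auto
    ultimately show ?thesis using e1 by auto
  qed
  thus ?thesis using C(1) by blast
qed

lemma qor_meas:
  assumes p: "p \<ge> 2"
  shows "qp_of_real p \<in> restrict_space lborel {0..} \<rightarrow>\<^sub>M qp_space p"
  unfolding qp_space_def
proof (rule measurable_measure_of)
  show "{qp_ball p g a |g a. a \<in> qp p} \<subseteq> Pow (qp p)" using Gb_sub unfolding Gb_def .
  show "qp_of_real p \<in> space (restrict_space lborel {0..}) \<rightarrow> qp p"
    using qor_in[OF p] by (auto simp: space_restrict_space)
  fix y assume "y \<in> {qp_ball p g a |g a. a \<in> qp p}"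
  then obtain g a where y: "y = qp_ball p g a" "a \<in> qp p" by blast
  obtain C where C: "C \<ge> 0" "qp_of_real p -` y \<inter> {0..} =
     {of_int C / real p powi (-g) ..< (of_int C + 1) / real p powi (-g)}"
    using qor_preimage[OF p y(2), of g] y(1) by blast
  have "qp_of_real p -` y \<inter> space (restrict_space lborel {0..}) = qp_of_real p -` y \<inter> {0..}"
    by (simp add: space_restrict_space)
  also have "\<dots> \<in> sets (restrict_space lborel {0..})"
    unfolding C(2) using C(1) p
    using Ico_nonneg[of "of_int C" "real p powi (-g)"] by (subst sets_restrict_space_iff) auto
  finally show "qp_of_real p -` y \<inter> space (restrict_space lborel {0..}) \<in> sets (restrict_space lborel {0..})" .
qed

lemma ball_measure:
  assumes p: "p \<ge> 2" and a: "a \<in> qp p"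
  shows "emeasure (haar p) (qp_ball p g a) = ennreal (real p powi g)"
proof -
  obtain C where C: "C \<ge> 0" "qp_of_real p -` qp_ball p g a \<inter> {0..} =
     {of_int C / real p powi (-g) ..< (of_int C + 1) / real p powi (-g)}"
    using qor_preimage[OF p a, of g] by blast
  let ?Q = "real p powi (-g)"
  have Q: "?Q > 0" using p by simp
  have "emeasure (haar p) (qp_ball p g a) = emeasure (restrict_space lborel {0..}) (qp_of_real p -` qp_ball p g a \<inter> {0..})"
    unfolding haar_def by (subst emeasure_distr[OF qor_meas[OF p] ball_sets[OF a]]) (simp add: space_restrict_space)
  also have "\<dots> = emeasure lborel {of_int C / ?Q ..< (of_int C + 1) / ?Q}"
    unfolding C(2) using C(1) Q Ico_nonneg[of "of_int C" ?Q]
    by (subst emeasure_restrict_space) auto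
  also have "\<dots> = ennreal ((of_int C + 1) / ?Q - of_int C / ?Q)"
    using Q by (intro emeasure_lborel_Ico) (simp add: divide_right_mono)
  also have "(of_int C + 1) / ?Q - of_int C / ?Q = real p powi g"
    using Q by (simp add: field_simps power_int_minus)
  finally show ?thesis .
qed




definition Tm :: "nat \<Rightarrow> (int \<Rightarrow> nat) \<Rightarrow> (int \<Rightarrow> nat) \<Rightarrow> (int \<Rightarrow> nat)" where
  "Tm p a x = qp_diff p (qp_divp p x) a"

lemma divp_in:
  assumes x: "x \<in> qp p" shows "qp_divp p x \<in> qp p"
proof -
  obtain g where g: "\<forall>j<g. x j = 0" using qp_lb[OF x] by blast
  have "\<forall>j<g - 1. qp_divp p x j = 0" using g unfolding qp_divp_def by auto
  thus ?thesis using qp_lt[OF x] unfolding qp_def qp_divp_def by blast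
qed

lemma shift_in:
  assumes x: "x \<in> qp p" shows "(\<lambda>j. x (j - 1)) \<in> qp p"
proof -
  obtain g where g: "\<forall>j<g. x j = 0" using qp_lb[OF x] by blast
  have "\<forall>j<g + 1. x (j - 1) = 0" using g by auto
  thus ?thesis using qp_lt[OF x] unfolding qp_def by blast
qed

lemma Tm_in: "p \<ge> 2 \<Longrightarrow> a \<in> qp p \<Longrightarrow> x \<in> qp p \<Longrightarrow> Tm p a x \<in> qp p"
  unfolding Tm_def by (rule diff_props(1)) (auto intro: divp_in)

lemma Tm_ball_iff:
  assumes p: "p \<ge> 2" and a: "a \<in> qp p" and b: "b \<in> qp p" and x: "x \<in> qp p"
  shows "Tm p a x \<in> qp_ball p g b \<longleftrightarrow> (\<forall>j < -g. x (j+1) = qp_add p b a j)"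
proof -
  have "Tm p a x \<in> qp_ball p g b \<longleftrightarrow> (\<forall>j < -g. qp_diff p (qp_divp p x) a j = b j)"
    unfolding ball_eq[OF p b] Tm_def using Tm_in[OF p a x] unfolding Tm_def by simp
  also have "\<dots> \<longleftrightarrow> (\<forall>j < -g. qp_divp p x j = qp_add p b a j)"
    by (rule diff_cyl[OF p divp_in[OF x] a b])
  finally show ?thesis unfolding qp_divp_def .
qed

lemma Tm_preimage:
  assumes p: "p \<ge> 2" and a: "a \<in> qp p" and b: "b \<in> qp p"
  shows "Tm p a -` qp_ball p g b \<inter> qp p = qp_ball p (g - 1) (\<lambda>j. qp_add p b a (j - 1))"
proof -
  have c: "(\<lambda>j. qp_add p b a (j - 1)) \<in> qp p" by (rule shift_in[OF add_props(1)[OF p b a]])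
  have "(\<forall>j < -g. x (j+1) = qp_add p b a j) \<longleftrightarrow> (\<forall>j < -(g-1). x j = qp_add p b a (j - 1))" for x
  proof
    assume h: "\<forall>j < -g. x (j+1) = qp_add p b a j"
    show "\<forall>j < -(g-1). x j = qp_add p b a (j - 1)"
    proof (intro allI impI)
      fix j assume "j < -(g-1)"
      hence "j - 1 < -g" by simp
      thus "x j = qp_add p b a (j - 1)" using h by fastforce
    qed
  next
    assume h: "\<forall>j < -(g-1). x j = qp_add p b a (j - 1)"
    show "\<forall>j < -g. x (j+1) = qp_add p b a j"
    proof (intro allI impI)
      fix j assume "j < -g"
      hence "j + 1 < -(g-1)" by simp
      thus "x (j+1) = qp_add p b a j" using h by fastforce
    qed
  qed
  thus ?thesis unfolding ball_eq[OF p c] using Tm_ball_iff[OF p a b] by auto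
qed

lemma Tm_meas:
  assumes p: "p \<ge> 2" and a: "a \<in> qp p"
  shows "Tm p a \<in> haar p \<rightarrow>\<^sub>M qp_space p"
  unfolding qp_space_def[of p]
proof (rule measurable_measure_of)
  show "{qp_ball p g a |g a. a \<in> qp p} \<subseteq> Pow (qp p)" using Gb_sub unfolding Gb_def .
  show "Tm p a \<in> space (haar p) \<rightarrow> qp p" using Tm_in[OF p a] by auto
  fix y assume "y \<in> {qp_ball p g a |g a. a \<in> qp p}"
  then obtain g b where y: "y = qp_ball p g b" "b \<in> qp p" by blast
  have "Tm p a -` y \<inter> space (haar p) = qp_ball p (g - 1) (\<lambda>j. qp_add p b a (j - 1))"
    using Tm_preimage[OF p a y(2)] y(1) by simp
  also have "\<dots> \<in> sets (haar p)"
    using ball_sets[OF shift_in[OF add_props(1)[OF p y(2) a]]] by simp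
  finally show "Tm p a -` y \<inter> space (haar p) \<in> sets (haar p)" .
qed

lemma ball_inter:
  assumes p: "p \<ge> 2" and a: "a \<in> qp p" and b: "b \<in> qp p"
  shows "qp_ball p g a \<inter> qp_ball p g' b = {} \<or> (\<exists>c\<in>qp p. qp_ball p g a \<inter> qp_ball p g' b = qp_ball p (min g g') c)"
proof (cases "qp_ball p g a \<inter> qp_ball p g' b = {}")
  case False
  then obtain x where x: "x \<in> qp_ball p g a" "x \<in> qp_ball p g' b" by blast
  have xq: "x \<in> qp p" using x unfolding qp_ball_def by auto
  have xa: "\<forall>j< -g. x j = a j" and xb: "\<forall>j< -g'. x j = b j" using x unfolding ball_eq[OF p a] ball_eq[OF p b] by auto
  have "qp_ball p g a \<inter> qp_ball p g' b = qp_ball p (min g g') x"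
    unfolding ball_eq[OF p a] ball_eq[OF p b] ball_eq[OF p xq] using xa xb by (auto simp: min_def)
  thus ?thesis using xq by blast
qed simp

lemma sigma_sets_insert_empty: "sigma_sets \<Omega> (insert {} G) = sigma_sets \<Omega> G"
proof
  show "sigma_sets \<Omega> (insert {} G) \<subseteq> sigma_sets \<Omega> G"
    by (rule sigma_sets_mono) (auto intro: sigma_sets.Empty sigma_sets.Basic)
  show "sigma_sets \<Omega> G \<subseteq> sigma_sets \<Omega> (insert {} G)" by (rule sigma_sets_mono') auto
qed

lemma distr_ball:
  assumes p: "p \<ge> 2" and a: "a \<in> qp p" and b: "b \<in> qp p"
  shows "emeasure (distr (haar p) (qp_space p) (Tm p a)) (qp_ball p g b) = ennreal (real p powi (g - 1))"
proof -
  have "emeasure (distr (haar p) (qp_space p) (Tm p a)) (qp_ball p g b) = emeasure (haar p) (Tm p a -` qp_ball p g b \<inter> qp p)"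
    by (subst emeasure_distr[OF Tm_meas[OF p a] ball_sets[OF b]]) simp
  also have "\<dots> = ennreal (real p powi (g - 1))"
    unfolding Tm_preimage[OF p a b] by (rule ball_measure[OF p shift_in[OF add_props(1)[OF p b a]]])
  finally show ?thesis .
qed

lemma Gb_Int_stable:
  assumes p: "p \<ge> 2"
  shows "Int_stable (insert {} (Gb p))"
  unfolding Int_stable_def
proof (intro ballI)
  fix X Y assume X: "X \<in> insert {} (Gb p)" and Y: "Y \<in> insert {} (Gb p)"
  show "X \<inter> Y \<in> insert {} (Gb p)"
  proof (cases "X = {} \<or> Y = {}")
    case True thus ?thesis by auto
  next
    case False
    then obtain g a g' b where XY: "X = qp_ball p g a" "a \<in> qp p" "Y = qp_ball p g' b" "b \<in> qp p"
      using X Y unfolding Gb_def by blast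
    from ball_inter[OF p XY(2) XY(4), of g g'] show ?thesis
    proof
      assume "qp_ball p g a \<inter> qp_ball p g' b = {}" thus ?thesis using XY by simp
    next
      assume "\<exists>c\<in>qp p. qp_ball p g a \<inter> qp_ball p g' b = qp_ball p (min g g') c"
      then obtain c where "c \<in> qp p" "X \<inter> Y = qp_ball p (min g g') c" using XY by blast
      thus ?thesis unfolding Gb_def by blast
    qed
  qed
qed

lemma Gb_cover:
  assumes p: "p \<ge> 2"
  shows "(\<Union>i. qp_ball p (int i) qp_zero) = qp p"
proof
  have z: "qp_zero \<in> qp p" using qp_zero_in p by simp
  show "(\<Union>i. qp_ball p (int i) qp_zero) \<subseteq> qp p" unfolding qp_ball_def by auto
  show "qp p \<subseteq> (\<Union>i. qp_ball p (int i) qp_zero)"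
  proof
    fix x assume x: "x \<in> qp p"
    obtain g where g: "\<forall>j<g. x j = 0" using qp_lb[OF x] by blast
    have "\<forall>j < - int (nat (-g)). x j = qp_zero j" using g unfolding qp_zero_def by auto
    hence "x \<in> qp_ball p (int (nat (-g))) qp_zero"
      unfolding ball_eq[OF p z] using x by blast
    thus "x \<in> (\<Union>i. qp_ball p (int i) qp_zero)" by blast
  qed
qed

lemma T_distr_gen:
  assumes p: "p \<ge> 2" and a: "a \<in> qp p" and X: "X \<in> insert {} (Gb p)"
  shows "emeasure (distr (haar p) (qp_space p) (Tm p a)) X = emeasure (density (haar p) (\<lambda>_. ennreal (1 / real p))) X"
  using X
proof
  assume "X = {}" thus ?thesis by simp
next
  assume "X \<in> Gb p"
  then obtain g b where X: "X = qp_ball p g b" "b \<in> qp p" unfolding Gb_def by blast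
  have "emeasure (density (haar p) (\<lambda>_. ennreal (1 / real p))) X = ennreal (1 / real p) * ennreal (real p powi g)"
    unfolding X(1) using ball_sets[OF X(2)] ball_measure[OF p X(2)]
    by (subst emeasure_density_const) auto
  also have "\<dots> = ennreal (real p powi (g - 1))"
    using p by (simp add: ennreal_mult[symmetric] power_int_diff)
  finally show ?thesis unfolding X(1) using distr_ball[OF p a X(2)] by simp
qed

lemma T_distr:
  assumes p: "p \<ge> 2" and a: "a \<in> qp p"
  shows "distr (haar p) (qp_space p) (Tm p a) = density (haar p) (\<lambda>_. ennreal (1 / real p))"
proof (rule measure_eqI_generator_eq[OF Gb_Int_stable[OF p] _ T_distr_gen[OF p a] _ _ _ Gb_cover[OF p]])
  have z: "qp_zero \<in> qp p" using qp_zero_in p by simp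
  show "insert {} (Gb p) \<subseteq> Pow (qp p)" using Gb_sub by auto
  show "sets (distr (haar p) (qp_space p) (Tm p a)) = sigma_sets (qp p) (insert {} (Gb p))"
    by (simp add: sigma_sets_insert_empty sets_qs)
  show "sets (density (haar p) (\<lambda>_. ennreal (1 / real p))) = sigma_sets (qp p) (insert {} (Gb p))"
    by (simp add: sigma_sets_insert_empty sets_qs)
  show "range (\<lambda>i. qp_ball p (int i) qp_zero) \<subseteq> insert {} (Gb p)"
    unfolding Gb_def using z by auto
  show "emeasure (distr (haar p) (qp_space p) (Tm p a)) (qp_ball p (int i) qp_zero) \<noteq> \<infinity>" for i
    using distr_ball[OF p a z] by simp
qed

lemma AE_Tm:
  assumes p: "p \<ge> 2" and a: "a \<in> qp p" and P: "AE x in haar p. P x"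
  shows "AE x in haar p. P (Tm p a x)"
proof -
  have "AE x in density (haar p) (\<lambda>_. ennreal (1 / real p)). P x"
    using P by (subst AE_density) auto
  hence "AE x in distr (haar p) (qp_space p) (Tm p a). P x" unfolding T_distr[OF p a] .
  thus ?thesis by (rule AE_distrD[OF Tm_meas[OF p a]])
qed

lemma nn_Tm:
  assumes p: "p \<ge> 2" and a: "a \<in> qp p" and f: "f \<in> borel_measurable (qp_space p)"
  shows "(\<integral>\<^sup>+ x. f (Tm p a x) \<partial>haar p) = ennreal (1 / real p) * (\<integral>\<^sup>+ x. f x \<partial>haar p)"
proof -
  have "(\<integral>\<^sup>+ x. f (Tm p a x) \<partial>haar p) = (\<integral>\<^sup>+ x. f x \<partial>distr (haar p) (qp_space p) (Tm p a))"
    using f by (subst nn_integral_distr[OF Tm_meas[OF p a]]) auto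
  also have "\<dots> = (\<integral>\<^sup>+ x. f x \<partial>density (haar p) (\<lambda>_. ennreal (1 / real p)))" by (simp only: T_distr[OF p a])
  also have "\<dots> = (\<integral>\<^sup>+ x. ennreal (1 / real p) * f x \<partial>haar p)"
    using f by (subst nn_integral_density) (auto simp: measurable_cong_sets[OF sets_haar])
  also have "\<dots> = ennreal (1 / real p) * (\<integral>\<^sup>+ x. f x \<partial>haar p)"
    using f by (subst nn_integral_cmult) (auto simp: measurable_cong_sets[OF sets_haar])
  finally show ?thesis .
qed




lemma funpow_divp: "(qp_divp p ^^ n) y = (\<lambda>j. y (j + int n))"
  by (induction n) (auto simp: qp_divp_def algebra_simps)

lemma digits_sum:
  fixes c :: "nat \<Rightarrow> nat" and p :: nat
  assumes c: "\<forall>i. c i < p" and p: "p \<ge> 2"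
  shows "(\<Sum>i<n. c i * p^i) < p^n \<and> (\<forall>i. ((\<Sum>i<n. c i * p^i) div p^i) mod p = (if i < n then c i else 0))"
proof (induction n)
  case 0
  then show ?case using p by simp
next
  case (Suc n)
  define K where "K = (\<Sum>i<n. c i * p^i)"
  have K: "K < p^n" "\<forall>i. (K div p^i) mod p = (if i < n then c i else 0)" using Suc unfolding K_def by auto
  have KS: "(\<Sum>i<Suc n. c i * p^i) = K + c n * p^n" unfolding K_def by simp
  have pp: "p^n > 0" "p > 0" using p by auto
  have bnd: "K + c n * p^n < p^Suc n"
  proof -
    have "K + c n * p^n < p^n + c n * p^n" using K(1) by simp
    also have "\<dots> = (c n + 1) * p^n" by simp
    also have "\<dots> \<le> p * p^n" using c by (intro mult_right_mono) (auto simp: Suc_le_eq)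
    finally show ?thesis by simp
  qed
  have dig: "((K + c n * p^n) div p^i) mod p = (if i < Suc n then c i else 0)" for i
  proof (cases "i < n")
    case True
    obtain m where m: "n = Suc m + i" using True by (metis add.commute less_iff_Suc_add add_Suc)
    have e: "c n * p^n = (c n * p^m * p) * p^i"
      unfolding m by (simp add: power_add algebra_simps)
    have "(K + c n * p^n) div p^i = K div p^i + c n * p^m * p"
      unfolding e using pp by (simp add: div_mult_self1 power_not_zero)
    hence "((K + c n * p^n) div p^i) mod p = (K div p^i) mod p" by simp
    thus ?thesis using K(2) True by simp
  next
    case False
    show ?thesis
    proof (cases "i = n")
      case True
      have "(K + c n * p^n) div p^n = c n" using K(1) pp by (simp add: div_mult_self1)
      thus ?thesis using True c by simp
    next
      case False
      hence "i \<ge> Suc n" using \<open>\<not> i < n\<close> by simp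
      hence "p^Suc n \<le> p^i" using p by (intro power_increasing) auto
      hence "(K + c n * p^n) div p^i = 0" using bnd by simp
      thus ?thesis using \<open>i \<ge> Suc n\<close> by simp
    qed
  qed
  show ?case unfolding KS using bnd dig by simp
qed

lemma mod_pow_digits:
  assumes "\<forall>i<n. (k div p^i) mod p = (k' div p^i) mod (p::nat)"
  shows "k mod p^n = k' mod p^n"
  using assms
proof (induction n)
  case (Suc n)
  have "k mod p^Suc n = p^n * (k div p^n mod p) + k mod p^n"
    using mod_mult2_eq[of k "p^n" p] by (simp only: power_Suc2)
  moreover have "k' mod p^Suc n = p^n * (k' div p^n mod p) + k' mod p^n"
    using mod_mult2_eq[of k' "p^n" p] by (simp only: power_Suc2)
  ultimately show ?case using Suc by simp
qed simp

lemma nat_digits_eq: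
  assumes "k < p^n" "k' < p^n" "\<forall>i<n. (k div p^i) mod p = (k' div p^i) mod (p::nat)"
  shows "k = k'"
  using mod_pow_digits[OF assms(3)] assms(1,2) by simp

lemma L2n_ind_le: "L2n M (\<lambda>x. indicator S x * h x) \<le> L2n M h"
  unfolding L2n_def by (intro nn_integral_mono ennreal_leI) (auto simp: indicator_def)




lemma Ip_hi: "a \<in> Ip p \<Longrightarrow> j \<ge> 0 \<Longrightarrow> a j = 0"
  unfolding Ip_def qp_frac_def by (metis (mono_tags, lifting) mem_Collect_eq not_less)

lemma ak_eval: "(qp_divp p ^^ n) (qp_of_nat p k) j = (if j + int n < 0 then 0 else (k div p ^ nat (j + int n)) mod p)"
  unfolding funpow_divp qp_of_nat_def by simp

lemma ak_in:
  assumes p: "p \<ge> 2" shows "(qp_divp p ^^ n) (qp_of_nat p k) \<in> qp p"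
proof -
  have "(qp_divp p ^^ n) (qp_of_nat p k) j < p" for j unfolding ak_eval using p by auto
  moreover have "\<forall>j < - int n. (qp_divp p ^^ n) (qp_of_nat p k) j = 0" unfolding ak_eval by auto
  ultimately show ?thesis unfolding qp_def by blast
qed

lemma ak_surj:
  assumes p: "p \<ge> 2" and a: "a \<in> Ip p" and lo: "\<forall>j < - int n. a j = 0"
  shows "\<exists>k<p^n. a = (qp_divp p ^^ n) (qp_of_nat p k)"
proof -
  have aq: "a \<in> qp p" using a unfolding Ip_def by auto
  define c where "c = (\<lambda>i. if i < n then a (int i - int n) else 0)"
  have c: "\<forall>i. c i < p" unfolding c_def using qp_lt[OF aq] p by auto
  define k where "k = (\<Sum>i<n. c i * p^i)"
  have k: "k < p^n" "\<forall>i. (k div p^i) mod p = (if i < n then c i else 0)"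
    using digits_sum[OF c p, of n] unfolding k_def by auto
  have "a j = (qp_divp p ^^ n) (qp_of_nat p k) j" for j
  proof (cases "j + int n < 0")
    case True thus ?thesis unfolding ak_eval using lo by simp
  next
    case False
    define i where "i = nat (j + int n)"
    have ji: "j = int i - int n" unfolding i_def using False by simp
    show ?thesis
    proof (cases "i < n")
      case True thus ?thesis unfolding ak_eval using False k(2) unfolding c_def i_def[symmetric] ji by simp
    next
      case False': False
      hence "j \<ge> 0" using ji by simp
      thus ?thesis unfolding ak_eval using False k(2) False' Ip_hi[OF a] unfolding i_def[symmetric] by simp
    qed
  qed
  thus ?thesis using k(1) by blast
qed

lemma ak_inj:
  assumes "k < p^n" "k' < p^n" "(qp_divp p ^^ n) (qp_of_nat p k) = (qp_divp p ^^ n) (qp_of_nat p k')"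
  shows "k = k'"
proof (rule nat_digits_eq[OF assms(1,2)], intro allI impI)
  fix i assume "i < n"
  have "(qp_divp p ^^ n) (qp_of_nat p k) (int i - int n) = (qp_divp p ^^ n) (qp_of_nat p k') (int i - int n)"
    using assms(3) by simp
  thus "(k div p^i) mod p = (k' div p^i) mod p" unfolding ak_eval by simp
qed

theorem corollary1:
  fixes p N :: nat and phi :: "(int \<Rightarrow> nat) \<Rightarrow> complex"
  assumes "prime p"
    and "refinable p phi"
    and "AE x in haar p. x \<notin> qp_ball p (int N) qp_zero \<longrightarrow> phi x = 0"
  shows "\<exists>h :: nat \<Rightarrow> complex. AE x in haar p.
           phi x = (\<Sum>k<p ^ (N+1). h k *
              phi (qp_diff p (qp_divp p x) ((qp_divp p ^^ (N+1)) (qp_of_nat p k))))"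
proof -
  have p: "p \<ge> 2" using assms(1) prime_ge_2_nat by blast
  define ak where "ak = (\<lambda>k. (qp_divp p ^^ (N+1)) (qp_of_nat p k))"
  define S where "S = qp_ball p (int N) qp_zero"
  define P where "P = p ^ (N+1)"
  have z: "qp_zero \<in> qp p" using qp_zero_in p by simp
  have S_eq: "S = {x \<in> qp p. \<forall>j < - int N. x j = 0}"
    unfolding S_def ball_eq[OF p z] by (simp add: qp_zero_def)
  have Ssets: "S \<in> sets (haar p)" unfolding S_def using ball_sets[OF z] by simp
  have akq: "ak k \<in> qp p" for k unfolding ak_def by (rule ak_in[OF p])
  have phim: "phi \<in> borel_measurable (haar p)"
    using assms(2) unfolding refinable_def qp_L2_def by blast
  have phim': "phi \<in> borel_measurable (qp_space p)"
    using phim measurable_cong_sets[OF sets_haar refl] by blast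
  have phiN: "L2n (haar p) phi < \<infinity>"
  proof -
    have "integrable (haar p) (\<lambda>x. (cmod (phi x))\<^sup>2)"
      using assms(2) unfolding refinable_def qp_L2_def by blast
    from integrableD(2)[OF this] show ?thesis unfolding L2n_def by (simp add: top.not_eq_extremum)
  qed
  have gm: "(\<lambda>x. phi (Tm p a x)) \<in> borel_measurable (haar p)" if "a \<in> qp p" for a
    using measurable_compose[OF Tm_meas[OF p that] phim'] .
  have gN: "L2n (haar p) (\<lambda>x. phi (Tm p a x)) < \<infinity>" if a: "a \<in> qp p" for a
  proof -
    have fm: "(\<lambda>y. ennreal ((cmod (phi y))\<^sup>2)) \<in> borel_measurable (qp_space p)"
      using phim' by measurable
    have "L2n (haar p) (\<lambda>x. phi (Tm p a x)) = ennreal (1 / real p) * L2n (haar p) phi"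
      unfolding L2n_def using nn_Tm[OF p a fm] by simp
    thus ?thesis using phiN by (simp add: ennreal_mult_less_top)
  qed
  have pull: "AE x in haar p. Tm p a x \<notin> S \<longrightarrow> phi (Tm p a x) = 0" if a: "a \<in> qp p" for a
    using AE_Tm[OF p a assms(3)] unfolding S_def .
  have AEq: "AE x in haar p. x \<in> qp p"
    using AE_space[of "haar p"] by simp
  have F2: "\<exists>k<P. a = ak k" if a: "a \<in> Ip p" and x: "x \<in> S" and T: "Tm p a x \<in> S" for a x
  proof -
    have aq: "a \<in> qp p" using a unfolding Ip_def by auto
    have xq: "x \<in> qp p" and x0: "\<forall>j < - int N. x j = 0" using x unfolding S_eq by auto
    have "\<forall>j < - int N. x (j+1) = qp_add p qp_zero a j"
      using T unfolding S_def Tm_ball_iff[OF p aq z xq] .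
    hence T': "\<forall>j < - int N. x (j+1) = a j" using add_zero[OF p aq] by simp
    have "\<forall>j < - int (N+1). a j = 0"
    proof (intro allI impI)
      fix j assume "j < - int (N+1)"
      hence "j < - int N" "j + 1 < - int N" by auto
      thus "a j = 0" using T' x0 by metis
    qed
    thus ?thesis using ak_surj[OF p a] unfolding ak_def P_def by blast
  qed
  have F3: "Tm p (ak k) x \<notin> S" if xq: "x \<in> qp p" and x: "x \<notin> S" for k x
  proof
    assume T: "Tm p (ak k) x \<in> S"
    have "\<forall>j < - int N. x (j+1) = qp_add p qp_zero (ak k) j"
      using T unfolding S_def Tm_ball_iff[OF p akq z xq] .
    hence T': "\<forall>j < - int N. x (j+1) = ak k j" using add_zero[OF p akq] by simp
    obtain i where i: "i < - int N" "x i \<noteq> 0" using x xq unfolding S_eq by auto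
    have "x i = ak k (i - 1)" using T' i(1) by (metis diff_add_cancel less_trans zless_add1_eq diff_less zero_less_one)
    also have "\<dots> = 0" unfolding ak_def ak_eval using i(1) by simp
    finally show False using i(2) by simp
  qed
  define ind where "ind = (\<lambda>x. indicator S x :: complex)"
  have indm: "ind \<in> borel_measurable (haar p)" unfolding ind_def using Ssets by measurable
  define f' where "f' = (\<lambda>x. ind x * phi x)"
  define g' where "g' = (\<lambda>k x. ind x * phi (Tm p (ak k) x))"
  have f'm[measurable]: "f' \<in> borel_measurable (haar p)" unfolding f'_def using indm phim by measurable
  have f'N: "L2n (haar p) f' < \<infinity>" unfolding f'_def ind_def
    using L2n_ind_le[of "haar p" S phi] phiN by (meson le_less_trans)
  have g'm1[measurable]: "g' k \<in> borel_measurable (haar p)" for k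
    unfolding g'_def using indm gm[OF akq] by (auto intro: borel_measurable_times)
  have g'm: "\<forall>k<P. g' k \<in> borel_measurable (haar p)" using g'm1 by blast
  have g'N: "\<forall>k<P. L2n (haar p) (g' k) < \<infinity>"
  proof (intro allI impI)
    fix k
    show "L2n (haar p) (g' k) < \<infinity>" unfolding g'_def ind_def
      using L2n_ind_le[of "haar p" S "\<lambda>x. phi (Tm p (ak k) x)"] gN[OF akq, of k] by (rule le_less_trans)
  qed
  have approx: "\<forall>e>0. \<exists>c. L2n (haar p) (\<lambda>x. f' x - (\<Sum>k<P. c k * g' k x)) < ennreal e"
  proof (intro allI impI)
    fix e :: real assume e: "e > 0"
    obtain F c0 where F: "finite F" "F \<subseteq> Ip p"
      and c0: "(\<integral>\<^sup>+ x. ennreal ((cmod (phi x - (\<Sum>a\<in>F. c0 a * phi (qp_diff p (qp_divp p x) a))))\<^sup>2) \<partial>haar p) < ennreal e"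
      using assms(2) e unfolding refinable_def by blast
    define c where "c = (\<lambda>k. if ak k \<in> F then c0 (ak k) else 0)"
    have Fq: "a \<in> qp p" if "a \<in> F" for a using F(2) that unfolding Ip_def by auto
    have AEF: "AE x in haar p. \<forall>a\<in>F. Tm p a x \<notin> S \<longrightarrow> phi (Tm p a x) = 0"
      using F(1) pull Fq by (intro eventually_ball_finite) auto
    have eqS: "AE x in haar p. x \<in> S \<longrightarrow> (\<Sum>a\<in>F. c0 a * phi (qp_diff p (qp_divp p x) a)) = (\<Sum>k<P. c k * phi (Tm p (ak k) x))"
      using AEF
    proof (eventually_elim)
      case (elim x)
      show ?case
      proof
        assume xS: "x \<in> S"
        let ?K = "ak ` {..<P}"
        have "(\<Sum>a\<in>F. c0 a * phi (qp_diff p (qp_divp p x) a)) = (\<Sum>a\<in>F. c0 a * phi (Tm p a x))"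
          unfolding Tm_def ..
        also have "\<dots> = (\<Sum>a\<in>F \<inter> ?K. c0 a * phi (Tm p a x)) + (\<Sum>a\<in>F - ?K. c0 a * phi (Tm p a x))"
          by (rule sum.Int_Diff[OF F(1)])
        also have "(\<Sum>a\<in>F - ?K. c0 a * phi (Tm p a x)) = 0"
        proof (rule sum.neutral, intro ballI)
          fix a assume aF: "a \<in> F - ?K"
          have "Tm p a x \<notin> S"
          proof
            assume "Tm p a x \<in> S"
            then obtain k where "k < P" "a = ak k" using F2[of a x] aF F(2) xS by auto
            thus False using aF by auto
          qed
          thus "c0 a * phi (Tm p a x) = 0" using elim aF by auto
        qed
        also have "F \<inter> ?K = ak ` {k \<in> {..<P}. ak k \<in> F}" by auto
        also have "(\<Sum>a\<in>ak ` {k \<in> {..<P}. ak k \<in> F}. c0 a * phi (Tm p a x)) = (\<Sum>k\<in>{k \<in> {..<P}. ak k \<in> F}. c0 (ak k) * phi (Tm p (ak k) x))"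
        proof (rule sum.reindex_cong[OF _ refl refl])
          show "inj_on ak {k \<in> {..<P}. ak k \<in> F}"
            unfolding inj_on_def ak_def P_def using ak_inj by blast
        qed
        also have "\<dots> = (\<Sum>k<P. c k * phi (Tm p (ak k) x))"
          unfolding c_def by (subst sum.inter_filter) (auto intro: sum.cong)
        finally show "(\<Sum>a\<in>F. c0 a * phi (qp_diff p (qp_divp p x) a)) = (\<Sum>k<P. c k * phi (Tm p (ak k) x))"
          by simp
      qed
    qed
    have "L2n (haar p) (\<lambda>x. f' x - (\<Sum>k<P. c k * g' k x)) \<le>
      (\<integral>\<^sup>+ x. ennreal ((cmod (phi x - (\<Sum>a\<in>F. c0 a * phi (qp_diff p (qp_divp p x) a))))\<^sup>2) \<partial>haar p)"
      unfolding L2n_def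
    proof (rule nn_integral_mono_AE)
      show "AE x in haar p. ennreal ((cmod (f' x - (\<Sum>k<P. c k * g' k x)))\<^sup>2)
          \<le> ennreal ((cmod (phi x - (\<Sum>a\<in>F. c0 a * phi (qp_diff p (qp_divp p x) a))))\<^sup>2)"
        using eqS
      proof eventually_elim
        case (elim x)
        show ?case
        proof (cases "x \<in> S")
          case True
          thus ?thesis using elim unfolding f'_def g'_def ind_def by simp
        next
          case False
          thus ?thesis unfolding f'_def g'_def ind_def by simp
        qed
      qed
    qed
    also have "\<dots> < ennreal e" by (rule c0)
    finally show "\<exists>c. L2n (haar p) (\<lambda>x. f' x - (\<Sum>k<P. c k * g' k x)) < ennreal e" by blast
  qed
  obtain h where h: "L2n (haar p) (\<lambda>x. f' x - (\<Sum>k<P. h k * g' k x)) = 0"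
    using closed_span[OF g'm g'N f'm f'N approx] by blast
  have AES: "AE x in haar p. x \<in> S \<longrightarrow> phi x = (\<Sum>k<P. h k * phi (Tm p (ak k) x))"
  proof -
    have m: "(\<lambda>x. ennreal ((cmod (f' x - (\<Sum>k<P. h k * g' k x)))\<^sup>2)) \<in> borel_measurable (haar p)"
      by measurable
    have "AE x in haar p. ennreal ((cmod (f' x - (\<Sum>k<P. h k * g' k x)))\<^sup>2) = 0"
      using h unfolding L2n_def by (subst (asm) nn_integral_0_iff_AE[OF m])
    thus ?thesis
    proof eventually_elim
      case (elim x)
      show ?case
      proof
        assume "x \<in> S"
        hence "f' x - (\<Sum>k<P. h k * g' k x) = phi x - (\<Sum>k<P. h k * phi (Tm p (ak k) x))"
          unfolding f'_def g'_def ind_def by simp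
        thus "phi x = (\<Sum>k<P. h k * phi (Tm p (ak k) x))" using elim by simp
      qed
    qed
  qed
  have AEall: "AE x in haar p. \<forall>k\<in>{..<P}. Tm p (ak k) x \<notin> S \<longrightarrow> phi (Tm p (ak k) x) = 0"
    using pull akq by (intro eventually_ball_finite) auto
  have "AE x in haar p. phi x = (\<Sum>k<P. h k * phi (Tm p (ak k) x))"
    using AES AEall AEq assms(3)
  proof eventually_elim
    case (elim x)
    show ?case
    proof (cases "x \<in> S")
      case True thus ?thesis using elim by simp
    next
      case False
      have "phi x = 0" using elim False unfolding S_def by simp
      moreover have "(\<Sum>k<P. h k * phi (Tm p (ak k) x)) = 0"
        using elim F3[OF _ False] by (intro sum.neutral) auto
      ultimately show ?thesis by simp
    qed
  qed
  thus ?thesis unfolding P_def ak_def Tm_def by blast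
qed


end
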